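(* For $n,s\in\mathbb{N}$, $$\overline{H}_n(s)=\sum_{k=1}^n(-1)^{k-1}\binom{n}{k}\,{}_{s+1}F_s\left(\{\tfrac12\}^{s},1-k;\{\tfrac32\}^{s};1\right).$$
   Context: $\mathbb{N}$ is the set of positive integers; $\overline{H}_n(s)=\sum_{k=0}^{n-1}\frac{1}{(2k+1)^s}$; $\{a\}^s$ denotes $a$ repeated $s$ times. ${}_{s+1}F_s(a_1,\ldots,a_{s+1};b_1,\ldots,b_s;x)=\sum_{i\geq 0}\frac{(a_1)_i\cdots(a_{s+1})_i}{(b_1)_i\cdots(b_s)_i}\frac{x^i}{i!}$, with $(a)_0=1$, $(a)_i=a(a+1)\cdots(a+i-1)$ for $i>0$ (a finite sum here since $1-k\leq 0$ is an integer). *)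

theory Defs
  imports "HOL-Analysis.Analysis"
begin

definition oddH :: "nat \<Rightarrow> nat \<Rightarrow> real" where
  "oddH n s = (\<Sum>k<n. 1 / (2 * real k + 1) ^ s)"

definition hypergeom :: "real list \<Rightarrow> real list \<Rightarrow> real \<Rightarrow> real" where
  "hypergeom as bs x =
     (\<Sum>i. (\<Prod>a\<leftarrow>as. pochhammer a i) / (\<Prod>b\<leftarrow>bs. pochhammer b i) * x ^ i / fact i)"

end

theory Submission imports Defs begin
lemma lemA: "(\<Sum>j\<le>n. (-1::int)^(i+j) * int (n choose j) * int (j choose i)) = (if i = n then 1 else 0)"
proof (cases "i \<le> n")
  case False
  then show ?thesis by (intro trans[OF sum.neutral]) auto
next
  case True
  let ?f = "\<lambda>j. (-1::int)^(i+j) * int (n choose j) * int (j choose i)"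
  have "(\<Sum>j\<le>n. ?f j) = (\<Sum>j=i..n. ?f j)"
    by (rule sum.mono_neutral_right) auto
  also have "\<dots> = (\<Sum>m=0..n-i. ?f (i+m))"
    using sum.atLeastAtMost_shift_0[OF True, of ?f] by (simp add: comp_def)
  also have "\<dots> = (\<Sum>m\<le>n-i. int (n choose i) * ((-1)^m * int ((n-i) choose m)))"
  proof (rule sum.cong)
    fix m assume m: "m \<in> {..n-i}"
    have "(n choose (i+m)) * ((i+m) choose i) = (n choose i) * ((n-i) choose m)"
      using choose_mult[of i "i+m" n] m True by auto
    moreover have "(-1::int)^(i+(i+m)) = (-1)^m"
      by (simp add: power_add flip: power_mult_distrib)
    ultimately show "?f (i+m) = int (n choose i) * ((-1)^m * int ((n-i) choose m))"
      by (metis (no_types, lifting) mult.assoc mult.left_commute of_nat_mult)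
  qed (auto simp: atLeast0AtMost)
  also have "\<dots> = int (n choose i) * (\<Sum>m\<le>n-i. (-1)^m * int ((n-i) choose m))"
    by (simp add: sum_distrib_left)
  also have "\<dots> = (if i = n then 1 else 0)"
  proof (cases "i = n")
    case False
    then have "n - i > 0" using True by auto
    from choose_alternating_sum[OF this, where 'a=int] False show ?thesis by simp
  qed simp
  finally show ?thesis .
qed

lemma lemT: "(\<Sum>j<n. (-1::int)^(i+j) * int (n choose Suc j) * int (j choose i)) = (if i < n then 1 else 0)"
proof (induction n)
  case 0
  then show ?case by simp
next
  case (Suc n)
  have "(\<Sum>j<Suc n. (-1::int)^(i+j) * int (Suc n choose Suc j) * int (j choose i))
     = (\<Sum>j<Suc n. (-1::int)^(i+j) * int (n choose j) * int (j choose i))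
     + (\<Sum>j<Suc n. (-1::int)^(i+j) * int (n choose Suc j) * int (j choose i))"
    by (simp add: sum.distrib algebra_simps)
  also have "(\<Sum>j<Suc n. (-1::int)^(i+j) * int (n choose j) * int (j choose i)) = (if i = n then 1 else 0)"
    using lemA[where n=n and i=i] lessThan_Suc_atMost by simp
  also have "(\<Sum>j<Suc n. (-1::int)^(i+j) * int (n choose Suc j) * int (j choose i)) = (if i < n then 1 else 0)"
    using Suc.IH by simp
  finally show ?case by auto
qed

lemma poch_ratio: "pochhammer (1/2::real) i / pochhammer (3/2) i = 1 / (2 * real i + 1)"
proof -
  have "pochhammer (1/2::real) (Suc i) = (1/2) * pochhammer (3/2) i"
    by (simp add: pochhammer_rec)
  moreover have "pochhammer (1/2::real) (Suc i) = pochhammer (1/2) i * (1/2 + real i)"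
    by (simp add: pochhammer_Suc)
  moreover have "pochhammer (3/2::real) i \<noteq> 0"
    by (simp add: pochhammer_eq_0_iff)
  ultimately show ?thesis
    by (simp add: field_simps)
qed

lemma poch_neg: assumes "k \<ge> 1"
  shows "pochhammer (1 - real k) i / fact i = (-1)^i * real ((k-1) choose i)"
proof -
  have "real (k - 1) gchoose i = (-1)^i * pochhammer (- real (k-1)) i / fact i"
    by (rule gbinomial_pochhammer)
  moreover have "- real (k-1) = 1 - real k" using assms by simp
  ultimately show ?thesis
    by (simp add: binomial_gbinomial)
qed

lemma hyp_eval: assumes "k \<ge> 1"
  shows "hypergeom (replicate s (1/2) @ [1 - real k]) (replicate s (3/2)) 1
     = (\<Sum>i<k. (-1)^i * real ((k-1) choose i) / (2 * real i + 1) ^ s)"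
proof -
  have tm: "(\<Prod>a\<leftarrow>replicate s (1/2) @ [1 - real k]. pochhammer a i) /
      (\<Prod>b\<leftarrow>replicate s (3/2). pochhammer b i) * 1 ^ i / fact i
      = (-1)^i * real ((k-1) choose i) / (2 * real i + 1) ^ s" for i
  proof -
    have "(\<Prod>a\<leftarrow>replicate s (1/2) @ [1 - real k]. pochhammer a i) /
      (\<Prod>b\<leftarrow>replicate s (3/2). pochhammer b i) * 1 ^ i / fact i
      = (pochhammer (1/2::real) i / pochhammer (3/2) i) ^ s * (pochhammer (1 - real k) i / fact i)"
      by (simp add: power_divide)
    also have "\<dots> = (-1)^i * real ((k-1) choose i) / (2 * real i + 1) ^ s"
      by (simp add: poch_ratio poch_neg[OF assms] power_divide)
    finally show ?thesis .
  qed
  show ?thesis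
    unfolding hypergeom_def tm
    by (rule suminf_finite[of "{..<k}"]) (use assms in auto)
qed

theorem corollary3p2:
  fixes n s :: nat
  assumes "n \<ge> 1" and "s \<ge> 1"
  shows "oddH n s =
    (\<Sum>k=1..n. (-1) ^ (k - 1) * real (n choose k) *
       hypergeom (replicate s (1/2) @ [1 - real k]) (replicate s (3/2)) 1)"
proof -
  define a where "a i = 1 / (2 * real i + 1) ^ s" for i
  have "(\<Sum>k=1..n. (-1) ^ (k - 1) * real (n choose k) *
       hypergeom (replicate s (1/2) @ [1 - real k]) (replicate s (3/2)) 1)
     = (\<Sum>j<n. (-1) ^ j * real (n choose Suc j) *
       hypergeom (replicate s (1/2) @ [1 - real (Suc j)]) (replicate s (3/2)) 1)"
    unfolding image_Suc_lessThan[symmetric] by (simp add: sum.reindex)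
  also have "\<dots> = (\<Sum>j<n. (-1) ^ j * real (n choose Suc j) *
       (\<Sum>i<n. (-1)^i * real (j choose i) * a i))"
  proof (rule sum.cong[OF refl])
    fix j assume j: "j \<in> {..<n}"
    have "(\<Sum>i<Suc j. (-1)^i * real ((Suc j-1) choose i) / (2 * real i + 1) ^ s)
        = (\<Sum>i<n. (-1)^i * real (j choose i) * a i)"
    proof -
      have "(\<Sum>i<Suc j. (-1)^i * real ((Suc j-1) choose i) / (2 * real i + 1) ^ s)
        = (\<Sum>i<Suc j. (-1)^i * real (j choose i) * a i)" by (simp add: a_def)
      also have "\<dots> = (\<Sum>i<n. (-1)^i * real (j choose i) * a i)"
        by (rule sum.mono_neutral_left) (use j in auto)
      finally show ?thesis .
    qed
    then show "(-1) ^ j * real (n choose Suc j) *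
       hypergeom (replicate s (1/2) @ [1 - real (Suc j)]) (replicate s (3/2)) 1
       = (-1) ^ j * real (n choose Suc j) * (\<Sum>i<n. (-1)^i * real (j choose i) * a i)"
      using hyp_eval[of "Suc j" s] by simp
  qed
  also have "\<dots> = (\<Sum>i<n. a i * real_of_int (\<Sum>j<n. (-1::int)^(i+j) * int (n choose Suc j) * int (j choose i)))"
  proof -
    have "(\<Sum>j<n. (-1) ^ j * real (n choose Suc j) * (\<Sum>i<n. (-1)^i * real (j choose i) * a i))
      = (\<Sum>j<n. \<Sum>i<n. a i * ((-1)^(i+j) * real (n choose Suc j) * real (j choose i)))"
      unfolding sum_distrib_left
      by (intro sum.cong refl) (simp add: power_add mult_ac)
    also have "\<dots> = (\<Sum>i<n. \<Sum>j<n. a i * ((-1)^(i+j) * real (n choose Suc j) * real (j choose i)))"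
      by (rule sum.swap)
    also have "\<dots> = (\<Sum>i<n. a i * real_of_int (\<Sum>j<n. (-1::int)^(i+j) * int (n choose Suc j) * int (j choose i)))"
      by (simp add: sum_distrib_left)
    finally show ?thesis .
  qed
  also have "\<dots> = (\<Sum>i<n. a i)"
    by (simp add: lemT)
  finally show ?thesis unfolding oddH_def a_def by simp
qed

end
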